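(* Let $-3<\alpha\le 1$ and let $f\in\mathcal{SK}(\alpha)$. Let the logarithmic coefficients $\gamma_n$ of $f$ be defined by $\log\frac{f(z)}{z}=\sum_{n=1}^\infty 2\gamma_n z^n$ ($z\in\Delta$, branch vanishing at $0$). Then \[ \sum_{n=1}^\infty|\gamma_n|^2\le\frac{1}{4(3+\alpha)^2}\left[\frac{3\pi^2}{2}+6\alpha\,\mathrm{Li}_2\!\left(-\frac{\alpha}{3}\right)+\alpha^2\,\mathrm{Li}_2\!\left(\frac{\alpha^2}{9}\right)\right], \] where $\mathrm{Li}_2(z)=\sum_{n=1}^\infty z^n/n^2$. The inequality is sharp, i.e. equality holds for some function in $\mathcal{SK}(\alpha)$.
   Context: $\Delta=\{z:|z|<1\}$. For analytic $F,G$ on $\Delta$, $F\prec G$ means there is an analytic $w:\Delta\to\Delta$ with $w(0)=0$ and $F=G\circ w$ on $\Delta$. For $\alpha\in(-3,1]$, $\widetilde{q}_\alpha(z)=\dfrac{3}{3+(\alpha-3)z-\alpha z^2}$. The class $\mathcal{SK}(\alpha)$ consists of all analytic $f$ on $\Delta$ with $f(0)=0$, $f'(0)=1$ and $\dfrac{zf'(z)}{f(z)}\prec\widetilde{q}_\alpha(z)$ in $\Delta$. *)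

theory Defs
  imports "HOL-Analysis.Analysis"
begin

definition unit_disc :: "complex set" where
  "unit_disc = ball 0 1"

definition subordinate :: "(complex \<Rightarrow> complex) \<Rightarrow> (complex \<Rightarrow> complex) \<Rightarrow> bool" where
  "subordinate F G \<longleftrightarrow> F holomorphic_on unit_disc \<and> G holomorphic_on unit_disc \<and>
     (\<exists>w. w holomorphic_on unit_disc \<and> w ` unit_disc \<subseteq> unit_disc \<and> w 0 = 0 \<and>
          (\<forall>z\<in>unit_disc. F z = G (w z)))"

definition q_tilde :: "real \<Rightarrow> complex \<Rightarrow> complex" where
  "q_tilde \<alpha> z = 3 / (3 + (of_real \<alpha> - 3) * z - of_real \<alpha> * z^2)"

text \<open>z f'(z)/f(z), extended by its limit value 1 at z = 0 (f(0)=0, f'(0)=1).\<close>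
definition log_deriv_quot :: "(complex \<Rightarrow> complex) \<Rightarrow> complex \<Rightarrow> complex" where
  "log_deriv_quot f z = (if z = 0 then 1 else z * deriv f z / f z)"

definition SK :: "real \<Rightarrow> (complex \<Rightarrow> complex) set" where
  "SK \<alpha> = {f. f holomorphic_on unit_disc \<and> f 0 = 0 \<and> deriv f 0 = 1 \<and>
              (\<forall>z\<in>unit_disc. z \<noteq> 0 \<longrightarrow> f z \<noteq> 0) \<and>
              subordinate (log_deriv_quot f) (q_tilde \<alpha>)}"

definition log_branch :: "(complex \<Rightarrow> complex) \<Rightarrow> (complex \<Rightarrow> complex) \<Rightarrow> bool" where
  "log_branch f g \<longleftrightarrow> g holomorphic_on unit_disc \<and> g 0 = 0 \<and>
     (\<forall>z\<in>unit_disc. z \<noteq> 0 \<longrightarrow> exp (g z) = f z / z)"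

text \<open>Logarithmic coefficients: g(z) = sum 2 gamma_n z^n.\<close>
definition log_coeff :: "(complex \<Rightarrow> complex) \<Rightarrow> nat \<Rightarrow> complex" where
  "log_coeff g n = (deriv ^^ n) g 0 / of_nat (fact n) / 2"

definition Li2 :: "real \<Rightarrow> real" where
  "Li2 x = (\<Sum>n. x ^ (Suc n) / (real (Suc n))^2)"

definition SK_bound :: "real \<Rightarrow> real" where
  "SK_bound \<alpha> = 1 / (4 * (3 + \<alpha>)^2) *
     (3 * pi^2 / 2 + 6 * \<alpha> * Li2 (- \<alpha> / 3) + \<alpha>^2 * Li2 (\<alpha>^2 / 9))"

end

theory Submission
  imports Defs "HOL-Complex_Analysis.Complex_Analysis"
begin


definition cf :: "(complex \<Rightarrow> complex) \<Rightarrow> nat \<Rightarrow> complex" where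
  "cf F k = (deriv ^^ k) F 0 / fact k"

definition EE :: "real \<Rightarrow> complex" where
  "EE t = exp (2 * of_real pi * \<i> * of_real t)"

lemma norm_EE [simp]: "norm (EE t) = 1"
  unfolding EE_def by (simp add: norm_exp_eq_Re)

lemma cnj_EE: "cnj (EE t) = inverse (EE t)"
  unfolding EE_def by (simp add: exp_cnj exp_minus[symmetric])

lemma EE_nz [simp]: "EE t \<noteq> 0"
  unfolding EE_def by simp

lemma EE_mult_cnj [simp]: "EE t * cnj (EE t) = 1"
  by (simp add: cnj_EE)

lemma coef_integral:
  assumes holo: "F holomorphic_on ball 0 R" and R: "R > 1"
  shows "((\<lambda>t. F (EE t) * cnj (EE t) ^ k) has_integral cf F k) {0..1}"
proof -
  have cont: "continuous_on (cball 0 1) F"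
    by (rule continuous_on_subset[OF holomorphic_on_imp_continuous_on[OF holo]]) (use R in auto)
  have hol1: "F holomorphic_on ball 0 1"
    by (rule holomorphic_on_subset[OF holo]) (use R in auto)
  have "((\<lambda>u. F u / (u - 0) ^ (Suc k)) has_contour_integral ((2 * pi * \<i>) / (fact k) * (deriv ^^ k) F 0))
           (circlepath 0 1)"
    by (rule Cauchy_has_contour_integral_higher_derivative_circlepath[OF cont hol1]) auto
  hence "((\<lambda>t. F (circlepath 0 1 t) / (circlepath 0 1 t) ^ Suc k *
            vector_derivative (circlepath 0 1) (at t within {0..1})) has_integral
          ((2 * pi * \<i>) / (fact k) * (deriv ^^ k) F 0)) {0..1}"
    by (simp add: has_contour_integral_def)
  hence "((\<lambda>t. (2 * pi * \<i>) * (F (EE t) * cnj (EE t) ^ k)) has_integral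
          ((2 * pi * \<i>) / (fact k) * (deriv ^^ k) F 0)) {0..1}"
  proof (rule has_integral_eq[rotated], goal_cases)
    case (1 t)
    hence t: "0 \<le> t" "t \<le> 1" by auto
    have c: "circlepath 0 1 t = EE t" by (simp add: circlepath EE_def)
    have ne: "EE t \<noteq> 0" by simp
    have vd: "vector_derivative (circlepath 0 1) (at t within {0..1}) = 2 * pi * \<i> * EE t"
      using t by (simp add: vector_derivative_circlepath01 EE_def)
    show ?case
      using ne by (simp add: c vd cnj_EE field_simps power_inverse)
  qed
  hence "((\<lambda>t. inverse (2 * pi * \<i>) * ((2 * pi * \<i>) * (F (EE t) * cnj (EE t) ^ k))) has_integral
          inverse (2 * pi * \<i>) * ((2 * pi * \<i>) / (fact k) * (deriv ^^ k) F 0)) {0..1}"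
    by (rule has_integral_mult_right)
  thus ?thesis by (simp add: cf_def field_simps)
qed

lemma cf_power: "cf (\<lambda>z. z ^ j) l = (if j = l then 1 else 0)"
proof -
  have "(deriv ^^ l) (\<lambda>w. w ^ j) 0 = pochhammer (of_nat (Suc j - l)) l * (0::complex) ^ (j - l)"
    using higher_deriv_power[of l 0 j 0] by simp
  moreover have "pochhammer (of_nat (Suc j - l)) l * (0::complex) ^ (j - l) = (if j = l then fact l else 0)"
  proof (cases "j = l")
    case True thus ?thesis by (simp add: pochhammer_fact)
  next
    case False
    show ?thesis
    proof (cases "l < j")
      case True thus ?thesis by simp
    next
      case False2: False
      hence "Suc j - l = 0" using False by simp
      thus ?thesis using False False2 by (simp add: pochhammer_0_left)
    qed
  qed
  ultimately show ?thesis by (simp add: cf_def)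
qed


lemma int_pow:
  "((\<lambda>t. EE t ^ j * cnj (EE t) ^ l) has_integral (if j = l then 1 else 0)) {0..1}"
proof -
  have "(\<lambda>z. z ^ j) holomorphic_on ball 0 2" by (intro holomorphic_intros)
  from coef_integral[OF this] show ?thesis by (simp add: cf_power)
qed

definition Pol :: "(nat \<Rightarrow> complex) \<Rightarrow> nat \<Rightarrow> complex \<Rightarrow> complex" where
  "Pol a N z = (\<Sum>j<N. a j * z ^ j)"

lemma Pol_holo [holomorphic_intros]: "Pol a N holomorphic_on S"
  unfolding Pol_def by (intro holomorphic_intros)

lemma cf_Pol: "cf (Pol a N) l = (if l < N then a l else 0)"
proof -
  have "((\<lambda>t. Pol a N (EE t) * cnj (EE t) ^ l) has_integral cf (Pol a N) l) {0..1}"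
    by (rule coef_integral[of _ 2]) (auto intro: holomorphic_intros)
  moreover have "((\<lambda>t. Pol a N (EE t) * cnj (EE t) ^ l) has_integral
      (\<Sum>j<N. a j * (if j = l then 1 else 0))) {0..1}"
  proof -
    have *: "\<And>j. ((\<lambda>t. a j * (EE t ^ j * cnj (EE t) ^ l)) has_integral (a j * (if j = l then 1 else 0))) {0..1}"
      by (rule has_integral_mult_right[OF int_pow])
    have "((\<lambda>t. \<Sum>j<N. a j * (EE t ^ j * cnj (EE t) ^ l)) has_integral (\<Sum>j<N. a j * (if j = l then 1 else 0))) {0..1}"
      by (rule has_integral_sum) (simp, rule *)
    thus ?thesis unfolding Pol_def sum_distrib_right by (simp add: mult.assoc)
  qed
  ultimately have "cf (Pol a N) l = (\<Sum>j<N. a j * (if j = l then 1 else 0))"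
    using has_integral_unique by blast
  also have "\<dots> = (if l < N then a l else 0)"
    by (simp add: if_distrib[of "\<lambda>x. _ * x"] sum.delta cong: if_cong)
  finally show ?thesis .
qed

lemma int_inner_Pol:
  assumes holo: "H holomorphic_on ball 0 R" and R: "R > 1"
  shows "((\<lambda>t. H (EE t) * cnj (Pol a N (EE t))) has_integral (\<Sum>l<N. cf H l * cnj (a l))) {0..1}"
proof -
  have "((\<lambda>t. \<Sum>l<N. cnj (a l) * (H (EE t) * cnj (EE t) ^ l)) has_integral (\<Sum>l<N. cnj (a l) * cf H l)) {0..1}"
    by (intro has_integral_sum has_integral_mult_right coef_integral[OF holo R]) auto
  thus ?thesis
    by (simp add: Pol_def sum_distrib_left mult_ac)
qed


lemma has_integral_Re_of:
  assumes "((\<lambda>t. complex_of_real (f t)) has_integral complex_of_real c) S"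
  shows "(f has_integral c) S"
  using has_integral_linear[OF assms bounded_linear_Re] by (simp add: o_def)

lemma has_integral_Re:
  assumes "(f has_integral c) S"
  shows "((\<lambda>t. Re (f t)) has_integral Re c) S"
  using has_integral_linear[OF assms bounded_linear_Re] by (simp add: o_def)

lemma mult_cnj_sq: "z * cnj z = complex_of_real (cmod z ^ 2)"
  by (metis complex_norm_square of_real_power)

lemma Parseval_Pol:
  "((\<lambda>t. cmod (Pol a N (EE t)) ^ 2) has_integral (\<Sum>l<N. cmod (a l) ^ 2)) {0..1}"
proof -
  have "((\<lambda>t. Pol a N (EE t) * cnj (Pol a N (EE t))) has_integral (\<Sum>l<N. cf (Pol a N) l * cnj (a l))) {0..1}"
    by (rule int_inner_Pol[of _ 2]) (auto intro: holomorphic_intros)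
  also have "(\<Sum>l<N. cf (Pol a N) l * cnj (a l)) = (\<Sum>l<N. complex_of_real (cmod (a l) ^ 2))"
  proof (intro sum.cong refl)
    fix l assume "l \<in> {..<N}"
    hence "cf (Pol a N) l = a l" by (simp add: cf_Pol)
    thus "cf (Pol a N) l * cnj (a l) = complex_of_real (cmod (a l) ^ 2)"
      by (simp only: mult_cnj_sq)
  qed
  finally have "((\<lambda>t. complex_of_real (cmod (Pol a N (EE t)) ^ 2)) has_integral
     complex_of_real (\<Sum>l<N. cmod (a l) ^ 2)) {0..1}"
    by (simp only: mult_cnj_sq of_real_sum)
  thus ?thesis by (rule has_integral_Re_of)
qed

lemma cont_EE: "continuous_on S EE"
  unfolding EE_def by (intro continuous_intros)

lemma cont_comp_EE:
  assumes holo: "H holomorphic_on ball 0 R" and R: "R > 1"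
  shows "continuous_on {0..1} (\<lambda>t. H (EE t))"
proof -
  have "continuous_on (EE ` {0..1}) H"
    by (rule continuous_on_subset[OF holomorphic_on_imp_continuous_on[OF holo]]) (use R in auto)
  thus ?thesis using continuous_on_compose[OF cont_EE, of "{0..1}" H] by (simp add: o_def)
qed

lemma norm_diff_sq: "cmod (x - y) ^ 2 = cmod x ^ 2 - 2 * Re (x * cnj y) + cmod y ^ 2"
  unfolding cmod_power2 by (simp add: power2_eq_square algebra_simps)

lemma Bessel:
  assumes holo: "H holomorphic_on ball 0 R" and R: "R > 1"
  shows "(\<lambda>t. cmod (H (EE t)) ^ 2) integrable_on {0..1}"
    and "(\<Sum>k<N. cmod (cf H k) ^ 2) \<le> integral {0..1} (\<lambda>t. cmod (H (EE t)) ^ 2)"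
proof -
  have c: "continuous_on {0..1} (\<lambda>t. H (EE t))" by (rule cont_comp_EE[OF holo R])
  show int: "(\<lambda>t. cmod (H (EE t)) ^ 2) integrable_on {0..1}"
    by (rule integrable_continuous_interval) (intro continuous_intros c)
  define S where "S = (\<Sum>k<N. cmod (cf H k) ^ 2)"
  define I where "I = integral {0..1} (\<lambda>t. cmod (H (EE t)) ^ 2)"
  have h0: "((\<lambda>t. cmod (H (EE t)) ^ 2) has_integral I) {0..1}"
    using int unfolding I_def by (simp add: has_integral_integral)
  have "((\<lambda>t. H (EE t) * cnj (Pol (cf H) N (EE t))) has_integral (\<Sum>l<N. cf H l * cnj (cf H l))) {0..1}"
    by (rule int_inner_Pol[OF holo R])
  also have "(\<Sum>l<N. cf H l * cnj (cf H l)) = complex_of_real S"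
    unfolding S_def by (simp only: mult_cnj_sq of_real_sum)
  finally have h1': "((\<lambda>t. H (EE t) * cnj (Pol (cf H) N (EE t))) has_integral complex_of_real S) {0..1}" .
  have h1: "((\<lambda>t. Re (H (EE t) * cnj (Pol (cf H) N (EE t)))) has_integral S) {0..1}"
    using has_integral_Re[OF h1'] by simp
  have h2: "((\<lambda>t. cmod (Pol (cf H) N (EE t)) ^ 2) has_integral S) {0..1}"
    unfolding S_def by (rule Parseval_Pol)
  have "((\<lambda>t. cmod (H (EE t)) ^ 2 - 2 * Re (H (EE t) * cnj (Pol (cf H) N (EE t)))
          + cmod (Pol (cf H) N (EE t)) ^ 2) has_integral (I - 2 * S + S)) {0..1}"
    by (intro has_integral_add has_integral_diff has_integral_mult_right h0 h1 h2)
  hence "((\<lambda>t. cmod (H (EE t) - Pol (cf H) N (EE t)) ^ 2) has_integral (I - 2 * S + S)) {0..1}"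
    by (simp only: norm_diff_sq[symmetric])
  hence "0 \<le> I - 2 * S + S"
    by (rule has_integral_nonneg) auto
  thus "S \<le> I" by simp
qed


lemma cf_mult:
  assumes "f holomorphic_on S" "g holomorphic_on S" "open S" "0 \<in> S"
  shows "cf (\<lambda>z. f z * g z) k = (\<Sum>i=0..k. cf f i * cf g (k - i))"
proof -
  have "cf (\<lambda>z. f z * g z) k =
     (\<Sum>i = 0..k. of_nat (k choose i) * (deriv ^^ i) f 0 * (deriv ^^ (k-i)) g 0) / fact k"
    unfolding cf_def using higher_deriv_mult[OF assms] by simp
  also have "\<dots> = (\<Sum>i=0..k. cf f i * cf g (k - i))"
    unfolding sum_divide_distrib
  proof (intro sum.cong refl)
    fix i assume "i \<in> {0..k}"
    hence ik: "i \<le> k" by simp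
    show "of_nat (k choose i) * (deriv ^^ i) f 0 * (deriv ^^ (k - i)) g 0 / fact k = cf f i * cf g (k - i)"
      using ik by (simp add: binomial_fact cf_def field_simps)
  qed
  finally show ?thesis .
qed

lemma cf_0 [simp]: "cf f 0 = f 0"
  by (simp add: cf_def)

lemma Lemma_M:
  assumes R: "R > 1" and holw: "w holomorphic_on ball 0 R" and w0: "w 0 = 0"
    and wb: "\<And>t. cmod (w (EE t)) \<le> 1"
    and holG: "G holomorphic_on ball 0 R"
  shows "(\<Sum>k<Suc N. cmod (cf (\<lambda>z. w z * G z) k) ^ 2) \<le> (\<Sum>k<N. cmod (cf G k) ^ 2)"
proof -
  define P where "P = Pol (cf G) N"
  have holP: "P holomorphic_on ball 0 R" unfolding P_def by (rule Pol_holo)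
  have R0: "0 \<in> ball 0 R" using R by simp
  have eq: "cf (\<lambda>z. w z * G z) k = cf (\<lambda>z. w z * P z) k" if "k \<le> N" for k
  proof -
    have "cf (\<lambda>z. w z * G z) k = (\<Sum>i=0..k. cf w i * cf G (k - i))"
      by (rule cf_mult[OF holw holG open_ball R0])
    also have "\<dots> = (\<Sum>i=0..k. cf w i * cf P (k - i))"
    proof (intro sum.cong refl)
      fix i assume i: "i \<in> {0..k}"
      show "cf w i * cf G (k - i) = cf w i * cf P (k - i)"
      proof (cases "i = 0")
        case True thus ?thesis by (simp add: w0)
      next
        case False
        hence "k - i < N" using i that by auto
        thus ?thesis by (simp add: P_def cf_Pol)
      qed
    qed
    also have "\<dots> = cf (\<lambda>z. w z * P z) k"
      by (rule cf_mult[OF holw holP open_ball R0, symmetric])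
    finally show ?thesis .
  qed
  have "(\<Sum>k<Suc N. cmod (cf (\<lambda>z. w z * G z) k) ^ 2) = (\<Sum>k<Suc N. cmod (cf (\<lambda>z. w z * P z) k) ^ 2)"
    by (intro sum.cong refl) (simp add: eq)
  also have "\<dots> \<le> integral {0..1} (\<lambda>t. cmod (w (EE t) * P (EE t)) ^ 2)"
    by (rule Bessel(2)[OF _ R]) (intro holomorphic_intros holw holP)
  also have "\<dots> \<le> integral {0..1} (\<lambda>t. cmod (P (EE t)) ^ 2)"
  proof (rule integral_le)
    show "(\<lambda>t. cmod (w (EE t) * P (EE t)) ^ 2) integrable_on {0..1}"
      by (rule Bessel(1)[OF _ R]) (intro holomorphic_intros holw holP)
    show "(\<lambda>t. cmod (P (EE t)) ^ 2) integrable_on {0..1}"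
      by (rule Bessel(1)[OF holP R])
    fix t :: real
    have "cmod (w (EE t) * P (EE t)) \<le> cmod (P (EE t))"
      using wb[of t] by (simp add: norm_mult mult_left_le_one_le)
    thus "cmod (w (EE t) * P (EE t)) ^ 2 \<le> cmod (P (EE t)) ^ 2"
      by (intro power_mono) auto
  qed
  also have "\<dots> = (\<Sum>k<N. cmod (cf G k) ^ 2)"
    unfolding P_def using Parseval_Pol by (rule integral_unique)
  finally show ?thesis .
qed


lemma cf_id_mult:
  assumes "F1 holomorphic_on S" "open S" "0 \<in> S"
  shows "cf (\<lambda>z. z * F1 z) (Suc k) = cf F1 k"
proof -
  have "cf (\<lambda>z. z * F1 z) (Suc k) = (\<Sum>i=0..Suc k. cf (\<lambda>z. z) i * cf F1 (Suc k - i))"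
    by (rule cf_mult[OF _ assms(1-3)]) (intro holomorphic_intros)
  also have "\<dots> = (\<Sum>i=0..Suc k. (if i = 1 then cf F1 k else 0))"
    by (intro sum.cong refl) (auto simp: cf_def)
  also have "\<dots> = cf F1 k" by simp
  finally show ?thesis .
qed

lemma cf_const_add:
  assumes "F holomorphic_on S" "open S" "0 \<in> S"
  shows "cf (\<lambda>z. c + F z) (Suc k) = cf F (Suc k)"
proof -
  have "(deriv ^^ Suc k) (\<lambda>z. c + F z) 0 = (deriv ^^ Suc k) (\<lambda>z. c) 0 + (deriv ^^ Suc k) F 0"
    by (rule higher_deriv_add[OF _ assms(1-3)]) (intro holomorphic_intros)
  thus ?thesis by (simp add: cf_def)
qed

lemma Rogosinski:
  assumes R: "R > 1" and holw: "w holomorphic_on ball 0 R" and w0: "w 0 = 0"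
    and wz: "\<And>z. z \<in> ball 0 R \<Longrightarrow> cmod (w z) \<le> cmod z"
  shows "F holomorphic_on ball 0 R \<Longrightarrow>
     (\<Sum>k<N. cmod (cf (\<lambda>z. F (w z)) k) ^ 2) \<le> (\<Sum>k<N. cmod (cf F k) ^ 2)"
proof (induction N arbitrary: F)
  case 0 thus ?case by simp
next
  case (Suc N)
  have holF: "F holomorphic_on ball 0 R" by fact
  define B where "B = ball (0::complex) R"
  have B0: "0 \<in> B" and oB: "open B" using R by (auto simp: B_def)
  have wB: "w z \<in> B" if "z \<in> B" for z
    using wz[of z] that by (auto simp: B_def)
  define F1 where "F1 = (\<lambda>z. if z = 0 then deriv F 0 else (F z - F 0) / (z - 0))"
  have holF1: "F1 holomorphic_on B"
    unfolding F1_def B_def by (rule pole_lemma_open[OF holF open_ball])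
  have Feq: "F = (\<lambda>z. F 0 + z * F1 z)"
    by (rule ext) (auto simp: F1_def)
  have cfF: "cf F (Suc k) = cf F1 k" for k
  proof -
    have "cf F (Suc k) = cf (\<lambda>z. F 0 + z * F1 z) (Suc k)" by (subst Feq) simp
    also have "\<dots> = cf (\<lambda>z. z * F1 z) (Suc k)"
      by (rule cf_const_add[OF _ oB B0]) (intro holomorphic_intros holF1)
    also have "\<dots> = cf F1 k" by (rule cf_id_mult[OF holF1 oB B0])
    finally show ?thesis .
  qed
  define G where "G = (\<lambda>z. F1 (w z))"
  have holG: "G holomorphic_on B"
    unfolding G_def
    by (rule holomorphic_on_compose[OF holw[folded B_def] holomorphic_on_subset[OF holF1], unfolded o_def])
       (auto intro: wB)
  have Fweq: "(\<lambda>z. F (w z)) = (\<lambda>z. F 0 + w z * G z)"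
    by (rule ext) (subst Feq, simp add: G_def)
  have cfFw: "cf (\<lambda>z. F (w z)) (Suc k) = cf (\<lambda>z. w z * G z) (Suc k)" for k
    unfolding Fweq by (rule cf_const_add[OF _ oB B0]) (intro holomorphic_intros holG holw[folded B_def])
  have wb: "cmod (w (EE t)) \<le> 1" for t
    using wz[of "EE t"] R by simp
  have "(\<Sum>k<Suc N. cmod (cf (\<lambda>z. F (w z)) k) ^ 2)
      = cmod (F 0) ^ 2 + (\<Sum>k<N. cmod (cf (\<lambda>z. w z * G z) (Suc k)) ^ 2)"
    by (simp add: sum.lessThan_Suc_shift cfFw w0 del: sum.lessThan_Suc)
  also have "(\<Sum>k<N. cmod (cf (\<lambda>z. w z * G z) (Suc k)) ^ 2) = (\<Sum>k<Suc N. cmod (cf (\<lambda>z. w z * G z) k) ^ 2)"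
    by (simp add: sum.lessThan_Suc_shift w0 del: sum.lessThan_Suc)
  also have "\<dots> \<le> (\<Sum>k<N. cmod (cf G k) ^ 2)"
    by (rule Lemma_M[OF R holw w0 wb holG[unfolded B_def]])
  also have "\<dots> \<le> (\<Sum>k<N. cmod (cf F1 k) ^ 2)"
    unfolding G_def by (rule Suc.IH) (use holF1 in \<open>simp add: B_def\<close>)
  also have "cmod (F 0) ^ 2 + (\<Sum>k<N. cmod (cf F1 k) ^ 2) = (\<Sum>k<Suc N. cmod (cf F k) ^ 2)"
    by (simp add: sum.lessThan_Suc_shift cfF del: sum.lessThan_Suc)
  finally show ?case by simp
qed



lemma q_denoms:
  assumes "cmod u < 1" "-3 < \<alpha>" "\<alpha> \<le> 1"
  shows "1 - u \<noteq> 0" "3 + of_real \<alpha> * u \<noteq> 0"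
proof -
  show "1 - u \<noteq> 0" using assms(1) by auto
  have "cmod (of_real \<alpha> * u) \<le> \<bar>\<alpha>\<bar>"
    using assms(1) by (simp add: norm_mult mult_left_le)
  also have "\<dots> < 3" using assms by auto
  finally have lt: "cmod (of_real \<alpha> * u) < 3" .
  show "3 + of_real \<alpha> * u \<noteq> 0"
  proof
    assume "3 + of_real \<alpha> * u = 0"
    hence "of_real \<alpha> * u = -3" by (simp add: add_eq_0_iff)
    with lt show False by simp
  qed
qed

lemma q_tilde_eq:
  assumes "cmod u < 1" "-3 < \<alpha>" "\<alpha> \<le> 1"
  shows "q_tilde \<alpha> u = of_real (3/(3+\<alpha>)) / (1 - u) + of_real (\<alpha>/(3+\<alpha>)) / (1 - of_real (-\<alpha>/3) * u)"
proof -
  note d = q_denoms[OF assms]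
  have a3: "3 + \<alpha> \<noteq> 0" "complex_of_real \<alpha> + 3 \<noteq> 0" using assms(2)
    by (auto simp: complex_eq_iff)
  have e1: "1 - of_real (-\<alpha>/3) * u = (3 + of_real \<alpha> * u) / 3" by (simp add: field_simps)
  have e2: "3 + (of_real \<alpha> - 3) * u - of_real \<alpha> * u^2 = (1 - u) * (3 + of_real \<alpha> * u)"
    by (simp add: algebra_simps power2_eq_square)
  have "q_tilde \<alpha> u = 3 / ((1 - u) * (3 + of_real \<alpha> * u))"
    unfolding q_tilde_def e2 ..
  also have "\<dots> = (of_real (3/(3+\<alpha>)) * (3 + of_real \<alpha> * u) + of_real (3*\<alpha>/(3+\<alpha>)) * (1 - u))
       / ((1 - u) * (3 + of_real \<alpha> * u))"
  proof -
    have "of_real (3/(3+\<alpha>)) * (3 + of_real \<alpha> * u) + of_real (3*\<alpha>/(3+\<alpha>)) * (1 - u)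
        = of_real (3/(3+\<alpha>) * 3 + 3*\<alpha>/(3+\<alpha>))"
      by (simp add: algebra_simps add_divide_distrib[symmetric] diff_divide_distrib[symmetric])
    also have "3/(3+\<alpha>) * 3 + 3*\<alpha>/(3+\<alpha>) = 3"
    proof -
      have "3/(3+\<alpha>) * 3 + 3*\<alpha>/(3+\<alpha>) = (9 + 3*\<alpha>)/(3+\<alpha>)" by (simp add: add_divide_distrib)
      also have "\<dots> = 3" using a3 by (simp add: divide_eq_eq)
      finally show ?thesis .
    qed
    finally show ?thesis by simp
  qed
  also have "\<dots> = of_real (3/(3+\<alpha>)) / (1 - u) + of_real (3*\<alpha>/(3+\<alpha>)) / (3 + of_real \<alpha> * u)"
    by (rule add_frac_eq[symmetric]) (use d in auto)
  also have "of_real (3*\<alpha>/(3+\<alpha>)) / (3 + of_real \<alpha> * u) = of_real (\<alpha>/(3+\<alpha>)) / (1 - of_real (-\<alpha>/3) * u)"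
    unfolding e1 using d by (simp add: field_simps)
  finally show ?thesis .
qed


definition qc :: "real \<Rightarrow> nat \<Rightarrow> real" where
  "qc \<alpha> n = 3/(3+\<alpha>) + \<alpha>/(3+\<alpha>) * (-\<alpha>/3) ^ n"

lemma cf_q:
  assumes "-3 < \<alpha>" "\<alpha> \<le> 1"
  shows "cf (q_tilde \<alpha>) n = complex_of_real (qc \<alpha> n)"
proof -
  define F where "F = Abs_fps (\<lambda>n. complex_of_real (qc \<alpha> n))"
  have x1: "\<bar>-\<alpha>/3\<bar> \<le> 1" using assms by auto
  have "eventually (\<lambda>u. u \<in> ball 0 1) (nhds (0::complex))"
    by (rule eventually_nhds_in_open) auto
  hence "eventually (\<lambda>u. (\<lambda>n. fps_nth F n * u ^ n) sums q_tilde \<alpha> u) (nhds 0)"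
  proof (rule eventually_mono)
    fix u :: complex assume "u \<in> ball 0 1"
    hence u: "cmod u < 1" by simp
    have xu: "cmod (of_real (-\<alpha>/3) * u) < 1"
    proof -
      have "cmod (of_real (-\<alpha>/3) * u) \<le> cmod u"
        unfolding norm_mult using x1 by (intro mult_left_le_one_le) auto
      thus ?thesis using u by simp
    qed
    have "(\<lambda>n. of_real (3/(3+\<alpha>)) * u ^ n + of_real (\<alpha>/(3+\<alpha>)) * (of_real (-\<alpha>/3) * u) ^ n) sums
          (of_real (3/(3+\<alpha>)) * (1 / (1 - u)) + of_real (\<alpha>/(3+\<alpha>)) * (1 / (1 - of_real (-\<alpha>/3) * u)))"
      by (intro sums_add sums_mult geometric_sums u xu)
    also have "\<dots> = q_tilde \<alpha> u"
      using q_tilde_eq[OF u assms] by simp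
    finally have *: "(\<lambda>n. of_real (3/(3+\<alpha>)) * u ^ n + of_real (\<alpha>/(3+\<alpha>)) * (of_real (-\<alpha>/3) * u) ^ n) sums
          q_tilde \<alpha> u" .
    have eq: "fps_nth F n * u ^ n = of_real (3/(3+\<alpha>)) * u ^ n + of_real (\<alpha>/(3+\<alpha>)) * (of_real (-\<alpha>/3) * u) ^ n" for n
    proof -
      have "(of_real (-\<alpha>/3) * u) ^ n = of_real ((-\<alpha>/3) ^ n) * u ^ n"
        by (simp only: power_mult_distrib of_real_power)
      thus ?thesis by (simp add: F_def qc_def algebra_simps)
    qed
    show "(\<lambda>n. fps_nth F n * u ^ n) sums q_tilde \<alpha> u"
      unfolding eq by (rule *)
  qed
  hence "q_tilde \<alpha> has_fps_expansion F" by (rule has_fps_expansionI)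
  from fps_nth_fps_expansion[OF this, of n] show ?thesis
    by (simp add: F_def cf_def)
qed


lemma Li2_sums:
  assumes "\<bar>y\<bar> \<le> 1"
  shows "(\<lambda>n. y ^ Suc n / (real (Suc n))^2) sums Li2 y"
proof -
  have s: "summable (\<lambda>n. 1 / (real (Suc n))^2)"
    using inverse_squares_sums by (simp add: add.commute sums_iff)
  have "summable (\<lambda>n. y ^ Suc n / (real (Suc n))^2)"
  proof (rule summable_comparison_test'[OF s])
    fix n :: nat
    have "\<bar>y\<bar> ^ Suc n \<le> 1" using assms by (intro power_le_one) auto
    hence "\<bar>y\<bar> ^ Suc n / (real (Suc n))^2 \<le> 1 / (real (Suc n))^2"
      by (intro divide_right_mono) auto
    thus "norm (y ^ Suc n / (real (Suc n))^2) \<le> 1 / (real (Suc n))^2"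
      by (simp add: power_abs abs_divide abs_mult add.commute)
  qed
  thus ?thesis unfolding Li2_def by (rule summable_sums)
qed

lemma sum_qc:
  assumes "-3 < \<alpha>" "\<alpha> \<le> 1"
  shows "(\<lambda>n. (qc \<alpha> (Suc n))^2 / (4 * (real (Suc n))^2)) sums SK_bound \<alpha>"
proof -
  define A where "A = 3/(3+\<alpha>)"
  define B where "B = \<alpha>/(3+\<alpha>)"
  define x where "x = -\<alpha>/3"
  have x0: "\<bar>x\<bar> \<le> 1" using assms by (auto simp: x_def)
  have x1: "\<bar>x\<bar> \<le> 1" "\<bar>x^2\<bar> \<le> 1"
    using x0 power_mono[of "\<bar>x\<bar>" 1 2] by (auto simp: power2_abs)
  have s0: "(\<lambda>n. 1 / (real (Suc n))^2) sums (pi^2/6)"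
    using inverse_squares_sums by (simp add: add.commute)
  have "(\<lambda>n. (A^2/4) * (1 / (real (Suc n))^2) + (A*B/2) * (x ^ Suc n / (real (Suc n))^2)
          + (B^2/4) * ((x^2) ^ Suc n / (real (Suc n))^2)) sums
        ((A^2/4) * (pi^2/6) + (A*B/2) * Li2 x + (B^2/4) * Li2 (x^2))"
    by (intro sums_add sums_mult s0 Li2_sums x1)
  moreover have "(A^2/4) * (1 / (real (Suc n))^2) + (A*B/2) * (x ^ Suc n / (real (Suc n))^2)
          + (B^2/4) * ((x^2) ^ Suc n / (real (Suc n))^2) = (qc \<alpha> (Suc n))^2 / (4 * (real (Suc n))^2)" for n
  proof -
    have "qc \<alpha> (Suc n) = A + B * x ^ Suc n" by (simp add: qc_def A_def B_def x_def)
    moreover have "(x^2) ^ Suc n = (x ^ Suc n)^2" by (simp add: power_mult_distrib power_mult[symmetric] mult.commute)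
    moreover have "\<And>y m::real. m \<noteq> 0 \<Longrightarrow> (A^2/4) * (1 / m^2) + (A*B/2) * (y / m^2) + (B^2/4) * (y^2 / m^2)
        = (A + B * y)^2 / (4 * m^2)"
      by (simp add: field_simps power2_eq_square)
    ultimately show ?thesis by simp
  qed
  moreover have "(A^2/4) * (pi^2/6) + (A*B/2) * Li2 x + (B^2/4) * Li2 (x^2) = SK_bound \<alpha>"
  proof -
    have a3: "3 + \<alpha> \<noteq> 0" using assms by auto
    have xx: "x^2 = \<alpha>^2/9" by (simp add: x_def power2_eq_square)
    have gen: "\<And>D a p L1 L2::real. D \<noteq> 0 \<Longrightarrow>
       ((3/D)^2/4) * (p/6) + ((3/D)*(a/D)/2) * L1 + ((a/D)^2/4) * L2 = 1/(4*D^2) * (3*p/2 + 6*a*L1 + a^2*L2)"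
      by (simp add: field_simps power2_eq_square)
    show ?thesis unfolding xx unfolding SK_bound_def A_def B_def x_def
      by (rule gen[OF a3])
  qed
  ultimately show ?thesis by simp
qed



lemma sub_coeff:
  assumes holp: "p holomorphic_on ball 0 1" and holq: "q holomorphic_on ball 0 1"
    and holw: "w holomorphic_on ball 0 1" and wd: "w ` ball 0 1 \<subseteq> ball 0 1"
    and w0: "w 0 = 0" and pq: "\<And>z. z \<in> ball 0 1 \<Longrightarrow> p z = q (w z)"
  shows "(\<Sum>k<N. cmod (cf p k) ^ 2) \<le> (\<Sum>k<N. cmod (cf q k) ^ 2)"
proof -
  have main: "(\<Sum>k<N. (\<rho>^k)^2 * cmod (cf p k) ^ 2) \<le> (\<Sum>k<N. cmod (cf q k) ^ 2)"
    if r: "0 < \<rho>" "\<rho> < 1" for \<rho> :: real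
  proof -
    define R where "R = 1 / \<rho>"
    have R1: "R > 1" using r by (simp add: R_def)
    have inB: "of_real \<rho> * z \<in> ball 0 1" if "z \<in> ball 0 R" for z :: complex
    proof -
      have "cmod z < 1 / \<rho>" using that by (simp add: R_def)
      hence "\<rho> * cmod z < 1" using r by (simp add: field_simps)
      moreover have "cmod (of_real \<rho> * z) = \<rho> * cmod z" using r by (simp add: norm_mult)
      ultimately show ?thesis by simp
    qed
    define w' where "w' = (\<lambda>z. w (of_real \<rho> * z) / of_real \<rho>)"
    define q' where "q' = (\<lambda>z. q (of_real \<rho> * z))"
    have img: "(\<lambda>z::complex. of_real \<rho> * z) ` ball 0 R \<subseteq> ball 0 1" using inB by auto
    have lin: "(\<lambda>z::complex. of_real \<rho> * z) holomorphic_on ball 0 R" by (intro holomorphic_intros)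
    have holw1: "(\<lambda>z. w (of_real \<rho> * z)) holomorphic_on ball 0 R"
      using holomorphic_on_compose_gen[OF lin holw img] by (simp add: o_def)
    have holw': "w' holomorphic_on ball 0 R"
      unfolding w'_def using r by (intro holomorphic_intros holw1) auto
    have holq': "q' holomorphic_on ball 0 R"
      using holomorphic_on_compose_gen[OF lin holq img] by (simp add: o_def q'_def)
    have holp': "(\<lambda>z. p (of_real \<rho> * z)) holomorphic_on ball 0 R"
      using holomorphic_on_compose_gen[OF lin holp img] by (simp add: o_def)
    have w'0: "w' 0 = 0" by (simp add: w'_def w0)
    have w'z: "cmod (w' z) \<le> cmod z" if "z \<in> ball 0 R" for z
    proof -
      have "cmod (w (of_real \<rho> * z)) \<le> cmod (of_real \<rho> * z)"
      proof (rule Schwarz_Lemma(1)[OF holw w0])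
        show "\<And>z. cmod z < 1 \<Longrightarrow> cmod (w z) < 1"
        proof -
          fix z :: complex assume "cmod z < 1"
          hence "z \<in> ball 0 1" by simp
          hence "w z \<in> ball 0 1" using wd by blast
          thus "cmod (w z) < 1" by simp
        qed
        show "cmod (of_real \<rho> * z) < 1" using inB[OF that] by simp
      qed
      thus ?thesis using r by (simp add: w'_def norm_mult norm_divide field_simps)
    qed
    have "(\<Sum>k<N. cmod (cf (\<lambda>z. q' (w' z)) k) ^ 2) \<le> (\<Sum>k<N. cmod (cf q' k) ^ 2)"
      by (rule Rogosinski[OF R1 holw' w'0 w'z holq'])
    moreover have "cf (\<lambda>z. q' (w' z)) k = of_real (\<rho>^k) * cf p k" for k
    proof -
      have "(deriv ^^ k) (\<lambda>z. q' (w' z)) 0 = (deriv ^^ k) (\<lambda>z. p (of_real \<rho> * z)) 0"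
      proof (rule higher_deriv_transform_within_open[where S="ball 0 R"])
        show "(\<lambda>z. q' (w' z)) holomorphic_on ball 0 R"
          using holomorphic_on_compose_gen[of w' "ball 0 R" q' "ball 0 R"] holw' holq' w'z
          by (force simp: o_def)
        show "(\<lambda>z. p (of_real \<rho> * z)) holomorphic_on ball 0 R" by (rule holp')
        show "0 \<in> ball (0::complex) R" using R1 by simp
        fix z :: complex assume "z \<in> ball 0 R"
        thus "q' (w' z) = p (of_real \<rho> * z)"
          using pq[OF inB] r by (simp add: q'_def w'_def)
      qed auto
      also have "\<dots> = of_real \<rho> ^ k * (deriv ^^ k) p (of_real \<rho> * 0)"
        by (rule higher_deriv_compose_linear[where S="ball 0 R" and T="ball 0 1"]) (use holp R1 inB in auto)
      finally show ?thesis by (simp add: cf_def)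
    qed
    moreover have "cf q' k = of_real (\<rho>^k) * cf q k" for k
    proof -
      have "(deriv ^^ k) q' 0 = of_real \<rho> ^ k * (deriv ^^ k) q (of_real \<rho> * 0)"
        unfolding q'_def
        by (rule higher_deriv_compose_linear[where S="ball 0 R" and T="ball 0 1"]) (use holq R1 inB in auto)
      thus ?thesis by (simp add: cf_def)
    qed
    ultimately have "(\<Sum>k<N. (\<rho>^k)^2 * cmod (cf p k) ^ 2) \<le> (\<Sum>k<N. (\<rho>^k)^2 * cmod (cf q k) ^ 2)"
      using r by (simp add: norm_mult power_mult_distrib norm_power)
    also have "\<dots> \<le> (\<Sum>k<N. cmod (cf q k) ^ 2)"
    proof (rule sum_mono)
      fix k
      have "(\<rho>^k)^2 \<le> 1" using r by (intro power_le_one) auto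
      thus "(\<rho>^k)^2 * cmod (cf q k) ^ 2 \<le> cmod (cf q k) ^ 2"
        by (intro mult_left_le_one_le) auto
    qed
    finally show ?thesis .
  qed
  have lim: "((\<lambda>\<rho>. \<Sum>k<N. (\<rho>^k)^2 * cmod (cf p k) ^ 2) \<longlongrightarrow> (\<Sum>k<N. (1^k)^2 * cmod (cf p k) ^ 2)) (at_left (1::real))"
    by (intro tendsto_intros)
  have ev: "eventually (\<lambda>\<rho>. (\<Sum>k<N. (\<rho>^k)^2 * cmod (cf p k) ^ 2) \<le> (\<Sum>k<N. cmod (cf q k) ^ 2)) (at_left (1::real))"
    unfolding eventually_at_left[of 0 1, OF zero_less_one] by (intro exI[of _ 0]) (auto intro: main)
  have "(\<Sum>k<N. (1^k)^2 * cmod (cf p k) ^ 2) \<le> (\<Sum>k<N. cmod (cf q k) ^ 2)"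
    by (rule tendsto_upperbound[OF lim ev]) simp
  thus ?thesis by simp
qed


lemma logderiv_eq:
  assumes holf: "f holomorphic_on ball 0 1" and holg: "g holomorphic_on ball 0 1"
    and nz: "\<And>z. z \<in> ball 0 1 \<Longrightarrow> z \<noteq> 0 \<Longrightarrow> f z \<noteq> 0"
    and eg: "\<And>z. z \<in> ball 0 1 \<Longrightarrow> z \<noteq> 0 \<Longrightarrow> exp (g z) = f z / z"
    and z: "z \<in> ball 0 1"
  shows "log_deriv_quot f z = 1 + z * deriv g z"
proof (cases "z = 0")
  case True thus ?thesis by (simp add: log_deriv_quot_def)
next
  case False
  define U where "U = ball 0 1 - {0::complex}"
  have oU: "open U" and zU: "z \<in> U" using z False by (auto simp: U_def)
  have dg: "(g has_field_derivative deriv g z) (at z)"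
    using holg z by (intro holomorphic_derivI[OF holg open_ball]) auto
  have df: "(f has_field_derivative deriv f z) (at z)"
    using holf z by (intro holomorphic_derivI[OF holf open_ball]) auto
  have d1: "((\<lambda>z. exp (g z)) has_field_derivative exp (g z) * deriv g z) (at z)"
    using DERIV_chain2[OF DERIV_exp dg] by simp
  have d2: "((\<lambda>z. f z / z) has_field_derivative (deriv f z * z - f z * 1) / (z * z)) (at z)"
    by (rule DERIV_divide[OF df DERIV_ident False])
  have d1': "((\<lambda>z. f z / z) has_field_derivative exp (g z) * deriv g z) (at z)"
    by (rule has_field_derivative_transform_within_open[OF d1 oU zU]) (auto simp: U_def eg)
  have eq: "exp (g z) * deriv g z = (deriv f z * z - f z * 1) / (z * z)"
    using DERIV_unique[OF d1' d2] .
  have fz: "f z \<noteq> 0" using nz[OF z False] .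
  have "f z / z * deriv g z = (deriv f z * z - f z) / (z * z)" using eq eg[OF z False] by simp
  hence "z * deriv g z = z * deriv f z / f z - 1"
    using fz False by (simp add: field_simps)
  thus ?thesis using False by (simp add: log_deriv_quot_def)
qed

lemma cf_deriv: "cf (deriv g) k = of_nat (Suc k) * cf g (Suc k)"
proof -
  have *: "(deriv ^^ Suc k) g = (deriv ^^ k) (deriv g)" by (simp only: funpow_Suc_right o_def)
  have F: "(fact (Suc k) :: complex) = of_nat (Suc k) * fact k" by (rule fact_Suc)
  have "of_nat (Suc k) * cf g (Suc k) = (of_nat (Suc k) * (deriv ^^ k) (deriv g) 0) / (of_nat (Suc k) * fact k)"
    by (simp only: cf_def * F times_divide_eq_right)
  also have "\<dots> = (deriv ^^ k) (deriv g) 0 / fact k"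
    by (rule mult_divide_mult_cancel_left) (simp only: of_nat_eq_0_iff Suc_neq_Zero not_False_eq_True)
  finally show ?thesis by (simp add: cf_def)
qed

lemma cf_logderiv:
  assumes holp: "p holomorphic_on ball 0 1" and holg: "g holomorphic_on ball 0 1"
    and peq: "\<And>z. z \<in> ball 0 1 \<Longrightarrow> p z = 1 + z * deriv g z"
  shows "cf p (Suc k) = of_nat (Suc k) * cf g (Suc k)"
proof -
  have hdg: "deriv g holomorphic_on ball 0 1" by (rule holomorphic_deriv[OF holg open_ball])
  have "(deriv ^^ Suc k) p 0 = (deriv ^^ Suc k) (\<lambda>z. 1 + z * deriv g z) 0"
    by (rule higher_deriv_transform_within_open[OF holp _ open_ball _ peq])
       (auto intro!: holomorphic_intros hdg)
  hence "cf p (Suc k) = cf (\<lambda>z. 1 + z * deriv g z) (Suc k)" by (simp add: cf_def)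
  also have "\<dots> = cf (\<lambda>z. z * deriv g z) (Suc k)"
    by (rule cf_const_add[where S="ball 0 1"]) (auto intro!: holomorphic_intros hdg)
  also have "\<dots> = cf (deriv g) k" by (rule cf_id_mult[OF hdg open_ball]) auto
  finally show ?thesis by (simp add: cf_deriv)
qed



lemma not_nonpos_1m:
  assumes "cmod u < 1"
  shows "1 - u \<notin> \<real>\<^sub>\<le>\<^sub>0"
proof -
  have "Re u \<le> cmod u" by (rule complex_Re_le_cmod)
  hence "Re (1 - u) > 0" using assms by simp
  thus ?thesis by (auto simp: complex_nonpos_Reals_iff)
qed

lemma q_holo:
  assumes "-3 < \<alpha>" "\<alpha> \<le> 1"
  shows "q_tilde \<alpha> holomorphic_on ball 0 1"
proof -
  have "(\<lambda>z. 3 / (3 + (of_real \<alpha> - 3) * z - of_real \<alpha> * z^2)) holomorphic_on ball 0 1"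
  proof (intro holomorphic_intros)
    fix z :: complex assume "z \<in> ball 0 1"
    hence z: "cmod z < 1" by simp
    have e2: "3 + (of_real \<alpha> - 3) * z - of_real \<alpha> * z^2 = (1 - z) * (3 + of_real \<alpha> * z)"
      by (simp add: algebra_simps power2_eq_square)
    show "3 + (of_real \<alpha> - 3) * z - of_real \<alpha> * z^2 \<noteq> 0"
      unfolding e2 using q_denoms[OF z assms] by simp
  qed
  thus ?thesis unfolding q_tilde_def[abs_def] .
qed

context
  fixes \<alpha> :: real
  assumes a: "-3 < \<alpha>" "\<alpha> \<le> 1"
begin

definition "A0 = complex_of_real (3/(3+\<alpha>))"
definition "B0 = complex_of_real (\<alpha>/(3+\<alpha>))"
definition "X0 = complex_of_real (-\<alpha>/3)"
definition "G0 = (\<lambda>z. - A0 * Ln (1 - z) - B0 * Ln (1 - X0 * z))"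
definition "f0 = (\<lambda>z. z * exp (G0 z))"

lemma X0z: "cmod u < 1 \<Longrightarrow> cmod (X0 * u) < 1"
proof -
  assume u: "cmod u < 1"
  have "\<bar>-\<alpha>/3\<bar> \<le> 1" using a by auto
  hence "cmod (X0 * u) \<le> cmod u" unfolding X0_def norm_mult by (intro mult_left_le_one_le) auto
  thus ?thesis using u by simp
qed

lemma AB1: "A0 + B0 = 1"
proof -
  have "3/(3+\<alpha>) + \<alpha>/(3+\<alpha>) = 1" using a by (simp add: add_divide_distrib[symmetric])
  hence "complex_of_real (3/(3+\<alpha>) + \<alpha>/(3+\<alpha>)) = 1" by simp
  thus ?thesis unfolding A0_def B0_def by (simp only: of_real_add)
qed

lemma G0_holo: "G0 holomorphic_on ball 0 1"
  unfolding G0_def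
  by (intro holomorphic_intros) (auto intro!: not_nonpos_1m X0z)

lemma G0_0: "G0 0 = 0" by (simp add: G0_def)

lemma G0_deriv:
  assumes z: "cmod z < 1"
  shows "(G0 has_field_derivative (A0 / (1 - z) + B0 * X0 / (1 - X0 * z))) (at z)"
proof -
  have d1: "((\<lambda>z. Ln (1 - z)) has_field_derivative inverse (1 - z) * (0 - 1)) (at z)"
    by (rule DERIV_chain2[OF has_field_derivative_Ln[OF not_nonpos_1m[OF z]] DERIV_diff[OF DERIV_const DERIV_ident]])
  have d2: "((\<lambda>z. Ln (1 - X0 * z)) has_field_derivative inverse (1 - X0 * z) * (0 - X0 * 1)) (at z)"
    by (rule DERIV_chain2[OF has_field_derivative_Ln[OF not_nonpos_1m[OF X0z[OF z]]]
          DERIV_diff[OF DERIV_const DERIV_cmult[OF DERIV_ident]]])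
  have "(G0 has_field_derivative (- A0 * (inverse (1 - z) * (0 - 1)) - B0 * (inverse (1 - X0 * z) * (0 - X0 * 1)))) (at z)"
    unfolding G0_def by (intro DERIV_diff DERIV_cmult d1 d2)
  thus ?thesis by (simp add: divide_inverse mult_ac)
qed

lemma G0_logderiv:
  assumes z: "cmod z < 1"
  shows "1 + z * deriv G0 z = q_tilde \<alpha> z"
proof -
  have "deriv G0 z = A0 / (1 - z) + B0 * X0 / (1 - X0 * z)"
    by (rule DERIV_imp_deriv[OF G0_deriv[OF z]])
  moreover have n1: "1 - z \<noteq> 0" using z by auto
  moreover have n2: "1 - X0 * z \<noteq> 0" using X0z[OF z] by auto
  moreover have k1: "z * (A0 / (1 - z)) = A0 / (1 - z) - A0"
    using n1 by (simp add: field_simps)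
  moreover have k2: "z * (B0 * X0 / (1 - X0 * z)) = B0 / (1 - X0 * z) - B0"
    using n2 by (simp add: field_simps)
  ultimately have "1 + z * deriv G0 z = A0 / (1 - z) + B0 / (1 - X0 * z) + (1 - A0 - B0)"
    by (simp add: distrib_left)
  also have "\<dots> = A0 / (1 - z) + B0 / (1 - X0 * z)"
  proof -
    have "1 - A0 - B0 = 0" using AB1 by (simp add: algebra_simps)
    thus ?thesis by simp
  qed
  also have "\<dots> = q_tilde \<alpha> z" using q_tilde_eq[OF z a] by (simp add: A0_def B0_def X0_def)
  finally show ?thesis .
qed

lemma f0_holo: "f0 holomorphic_on ball 0 1"
  unfolding f0_def by (intro holomorphic_intros G0_holo)

lemma f0_deriv: "deriv f0 0 = 1"
proof -
  have d: "(G0 has_field_derivative (A0 / (1 - 0) + B0 * X0 / (1 - X0 * 0))) (at 0)"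
    by (rule G0_deriv) simp
  have "(f0 has_field_derivative (1 * exp (G0 0) + (exp (G0 0) * (A0 / (1 - 0) + B0 * X0 / (1 - X0 * 0))) * 0)) (at 0)"
    unfolding f0_def by (intro DERIV_mult DERIV_ident DERIV_chain2[OF DERIV_exp d])
  hence "(f0 has_field_derivative 1) (at 0)" by (simp add: G0_0)
  thus ?thesis by (rule DERIV_imp_deriv)
qed

lemma f0_ldq:
  assumes z: "z \<in> ball 0 1"
  shows "log_deriv_quot f0 z = q_tilde \<alpha> z"
proof -
  have "log_deriv_quot f0 z = 1 + z * deriv G0 z"
    by (rule logderiv_eq[OF f0_holo G0_holo _ _ z]) (auto simp: f0_def)
  also have "\<dots> = q_tilde \<alpha> z" using z by (intro G0_logderiv) simp
  finally show ?thesis .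
qed

lemma f0_SK: "f0 \<in> SK \<alpha>"
proof -
  have hq: "q_tilde \<alpha> holomorphic_on ball 0 1" by (rule q_holo[OF a])
  have hl: "log_deriv_quot f0 holomorphic_on ball 0 1"
    by (rule holomorphic_transform[OF hq]) (simp add: f0_ldq)
  have "subordinate (log_deriv_quot f0) (q_tilde \<alpha>)"
    unfolding subordinate_def unit_disc_def
    by (intro conjI hl hq exI[of _ "\<lambda>z. z"]) (auto simp: f0_ldq)
  thus ?thesis
    unfolding SK_def unit_disc_def using f0_holo f0_deriv by (auto simp: f0_def)
qed

lemma G0_branch: "log_branch f0 G0"
  unfolding log_branch_def unit_disc_def using G0_holo G0_0 by (auto simp: f0_def)

end



lemma lc_sq:
  assumes holp: "p holomorphic_on ball 0 1" and holg: "g holomorphic_on ball 0 1"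
    and peq: "\<And>z. z \<in> ball 0 1 \<Longrightarrow> p z = 1 + z * deriv g z"
  shows "cmod (log_coeff g (Suc n)) ^ 2 = cmod (cf p (Suc n)) ^ 2 / (4 * (real (Suc n))^2)"
proof -
  have c: "cf p (Suc n) = of_nat (Suc n) * cf g (Suc n)" by (rule cf_logderiv[OF holp holg peq])
  have lc: "log_coeff g (Suc n) = cf g (Suc n) / 2" by (simp only: log_coeff_def cf_def of_nat_fact)
  have "cmod (log_coeff g (Suc n)) = cmod (cf g (Suc n)) / 2" unfolding lc norm_divide by simp
  moreover have "cmod (cf p (Suc n)) = real (Suc n) * cmod (cf g (Suc n))"
    unfolding c norm_mult norm_of_nat by simp
  moreover have "\<And>L C P m::real. m \<noteq> 0 \<Longrightarrow> L = C/2 \<Longrightarrow> P = m*C \<Longrightarrow> L^2 = P^2/(4*m^2)"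
  proof -
    fix L C P m :: real assume m: "m \<noteq> 0" and l: "L = C/2" and pp: "P = m*C"
    show "L^2 = P^2/(4*m^2)" unfolding l pp using m by (simp add: power2_eq_square field_simps)
  qed
  ultimately show ?thesis by (metis of_nat_eq_0_iff nat.distinct(1))
qed

lemma abel_le:
  fixes x y lam :: "nat \<Rightarrow> real"
  assumes xy: "\<And>N. (\<Sum>n<N. x n) \<le> (\<Sum>n<N. y n)"
    and mono: "\<And>n. lam (Suc n) \<le> lam n" and pos: "\<And>n. 0 \<le> lam n"
  shows "(\<Sum>n<N. lam n * x n) \<le> (\<Sum>n<N. lam n * y n)"
proof -
  define D where "D m = (\<Sum>n<m. y n - x n)" for m
  have D0: "0 \<le> D m" for m using xy[of m] by (simp add: D_def sum_subtractf)
  have id: "(\<Sum>n<N. lam n * (y n - x n)) = lam N * D N + (\<Sum>n<N. (lam n - lam (Suc n)) * D (Suc n))" for N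
  proof (induction N)
    case 0 thus ?case by (simp add: D_def)
  next
    case (Suc N)
    have "lam N * D (Suc N) = lam N * D N + lam N * (y N - x N)" by (simp add: D_def algebra_simps)
    thus ?case using Suc by (simp add: algebra_simps)
  qed
  have "0 \<le> lam N * D N + (\<Sum>n<N. (lam n - lam (Suc n)) * D (Suc n))"
    using pos D0 mono by (intro add_nonneg_nonneg sum_nonneg mult_nonneg_nonneg) auto
  hence "0 \<le> (\<Sum>n<N. lam n * (y n - x n))" by (simp only: id)
  thus ?thesis by (simp add: algebra_simps sum_subtractf)
qed

theorem theorem3p3:
  fixes \<alpha> :: real
  assumes "-3 < \<alpha>" and "\<alpha> \<le> 1"
  shows "(\<forall>f\<in>SK \<alpha>. \<forall>g. log_branch f g \<longrightarrow>
            summable (\<lambda>n. (cmod (log_coeff g (Suc n)))^2) \<and>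
            (\<Sum>n. (cmod (log_coeff g (Suc n)))^2) \<le> SK_bound \<alpha>)
       \<and> (\<exists>f\<in>SK \<alpha>. \<exists>g. log_branch f g \<and>
            summable (\<lambda>n. (cmod (log_coeff g (Suc n)))^2) \<and>
            (\<Sum>n. (cmod (log_coeff g (Suc n)))^2) = SK_bound \<alpha>)"
proof (intro conjI ballI allI impI)
  note a = assms
  have cq: "cmod (cf (q_tilde \<alpha>) k) ^ 2 = (qc \<alpha> k)^2" for k
    by (simp add: cf_q[OF a])
  have sq: "(\<lambda>n. (qc \<alpha> (Suc n))^2 / (4 * (real (Suc n))^2)) sums SK_bound \<alpha>"
    by (rule sum_qc[OF a])
  show "\<exists>f\<in>SK \<alpha>. \<exists>g. log_branch f g \<and>
            summable (\<lambda>n. (cmod (log_coeff g (Suc n)))^2) \<and>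
            (\<Sum>n. (cmod (log_coeff g (Suc n)))^2) = SK_bound \<alpha>"
  proof (intro bexI[OF _ f0_SK[OF a]] exI[of _ "G0 \<alpha>"] conjI)
    show "log_branch (f0 \<alpha>) (G0 \<alpha>)" by (rule G0_branch[OF a])
    have "cmod (log_coeff (G0 \<alpha>) (Suc n)) ^ 2 = (qc \<alpha> (Suc n))^2 / (4 * (real (Suc n))^2)" for n
    proof -
      have "cmod (log_coeff (G0 \<alpha>) (Suc n)) ^ 2 = cmod (cf (q_tilde \<alpha>) (Suc n)) ^ 2 / (4 * (real (Suc n))^2)"
        by (rule lc_sq[OF q_holo[OF a] G0_holo[OF a]]) (simp add: G0_logderiv[OF a])
      thus ?thesis by (simp add: cq)
    qed
    hence s: "(\<lambda>n. (cmod (log_coeff (G0 \<alpha>) (Suc n)))^2) sums SK_bound \<alpha>" using sq by simp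
    show "summable (\<lambda>n. (cmod (log_coeff (G0 \<alpha>) (Suc n)))^2)" using s by (rule sums_summable)
    show "(\<Sum>n. (cmod (log_coeff (G0 \<alpha>) (Suc n)))^2) = SK_bound \<alpha>" using s by (rule sums_unique[symmetric])
  qed
  fix f g assume fS: "f \<in> SK \<alpha>" and lb: "log_branch f g"
  define p where "p = log_deriv_quot f"
  from fS have holf: "f holomorphic_on ball 0 1" and nz: "\<And>z. z \<in> ball 0 1 \<Longrightarrow> z \<noteq> 0 \<Longrightarrow> f z \<noteq> 0"
    and sub: "subordinate p (q_tilde \<alpha>)"
    by (auto simp: SK_def unit_disc_def p_def)
  from sub obtain w where holp: "p holomorphic_on ball 0 1" and holq: "q_tilde \<alpha> holomorphic_on ball 0 1"
    and holw: "w holomorphic_on ball 0 1" and wd: "w ` ball 0 1 \<subseteq> ball 0 1" and w0: "w 0 = 0"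
    and pw: "\<And>z. z \<in> ball 0 1 \<Longrightarrow> p z = q_tilde \<alpha> (w z)"
    unfolding subordinate_def unit_disc_def by blast
  from lb have holg: "g holomorphic_on ball 0 1" and eg: "\<And>z. z \<in> ball 0 1 \<Longrightarrow> z \<noteq> 0 \<Longrightarrow> exp (g z) = f z / z"
    by (auto simp: log_branch_def unit_disc_def)
  have peq: "p z = 1 + z * deriv g z" if "z \<in> ball 0 1" for z
    unfolding p_def by (rule logderiv_eq[OF holf holg nz eg that])
  have part: "(\<Sum>k<N. cmod (cf p k) ^ 2) \<le> (\<Sum>k<N. cmod (cf (q_tilde \<alpha>) k) ^ 2)" for N
    by (rule sub_coeff[OF holp holq holw wd w0 pw])
  have p0: "cf p 0 = 1" by (simp add: p_def log_deriv_quot_def)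
  have q0: "cf (q_tilde \<alpha>) 0 = 1" by (simp add: q_tilde_def)
  have pp0: "p 0 = 1" by (simp add: p_def log_deriv_quot_def)
  have qc0: "qc \<alpha> 0 = 1"
  proof -
    have "3/(3+\<alpha>) + \<alpha>/(3+\<alpha>) = 1" using a by (simp add: add_divide_distrib[symmetric])
    thus ?thesis by (simp add: qc_def)
  qed
  have part': "(\<Sum>n<N. cmod (cf p (Suc n)) ^ 2) \<le> (\<Sum>n<N. (qc \<alpha> (Suc n)) ^ 2)" for N
    using part[of "Suc N"] by (simp add: sum.lessThan_Suc_shift pp0 qc0 cq del: sum.lessThan_Suc)
  define lam where "lam n = 1 / (4 * (real (Suc n))^2)" for n
  have lam_mono: "lam (Suc n) \<le> lam n" for n
    unfolding lam_def by (intro divide_left_mono mult_left_mono power_mono) auto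
  have lam_pos: "0 \<le> lam n" for n unfolding lam_def by simp
  have aeq: "cmod (log_coeff g (Suc n)) ^ 2 = lam n * cmod (cf p (Suc n)) ^ 2" for n
    using lc_sq[OF holp holg peq, of n] by (simp add: lam_def)
  have beq: "(qc \<alpha> (Suc n))^2 / (4 * (real (Suc n))^2) = lam n * (qc \<alpha> (Suc n))^2" for n
    by (simp add: lam_def)
  have sb: "(\<lambda>n. lam n * (qc \<alpha> (Suc n))^2) sums SK_bound \<alpha>" using sq by (simp only: beq)
  have bound: "(\<Sum>n<N. cmod (log_coeff g (Suc n)) ^ 2) \<le> SK_bound \<alpha>" for N
  proof -
    have "(\<Sum>n<N. cmod (log_coeff g (Suc n)) ^ 2) = (\<Sum>n<N. lam n * cmod (cf p (Suc n)) ^ 2)"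
      by (simp add: aeq)
    also have "\<dots> \<le> (\<Sum>n<N. lam n * (qc \<alpha> (Suc n))^2)"
      by (rule abel_le[where x="\<lambda>n. cmod (cf p (Suc n)) ^ 2" and y="\<lambda>n. (qc \<alpha> (Suc n))^2" and lam=lam,
            OF part' lam_mono lam_pos])
    also have "\<dots> \<le> SK_bound \<alpha>"
      using sum_le_suminf[OF sums_summable[OF sb], of "{..<N}"] sums_unique[OF sb] lam_pos
      by simp
    finally show ?thesis .
  qed
  show "summable (\<lambda>n. (cmod (log_coeff g (Suc n)))^2)"
    by (rule summableI_nonneg_bounded[OF _ bound]) simp
  show "(\<Sum>n. (cmod (log_coeff g (Suc n)))^2) \<le> SK_bound \<alpha>"
    by (rule suminf_le_const[OF summableI_nonneg_bounded[OF _ bound] bound]) simp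
qed

end
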